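(* Let $(\phi_t)$ be a parabolic semigroup in $\mathbb{H}$ with Denjoy--Wolff point $\infty$, and let its infinitesimal generator $G\colon \mathbb{H}\to\mathbb{H}$ have Herglotz representation $$G(z)=\alpha z+\beta+\int_{\mathbb{R}}\frac{1+sz}{s-z}\,d\mu(s),\qquad z\in\mathbb{H},$$ with $\alpha\ge 0$, $\beta\in\mathbb{R}$, $\mu$ a positive finite Borel measure on $\mathbb{R}$. Assume $$\alpha=0,\qquad \int_{\mathbb{R}}s^2\,d\mu(s)<+\infty,\qquad \beta=\int_{\mathbb{R}}s\,d\mu(s).$$ Then every orbit $t\mapsto\phi_t(z)$, $z\in\mathbb{H}$, converges to $\infty$ orthogonally, i.e. $\phi_t(z)\to\infty$ and $\arg(\phi_t(z))\to\pi/2$ as $t\to+\infty$.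
   Context: $\mathbb{H}=\{z\in\mathbb{C}:\mathrm{Im} z>0\}$. A semigroup in $\mathbb{H}$ is a family $(\phi_t)_{t\ge0}$ of holomorphic self-maps of $\mathbb{H}$ with $\phi_0=\mathrm{id}$, $\phi_{t+s}=\phi_t\circ\phi_s$ for all $t,s\ge0$, and $\phi_t(z)\to z$ as $t\to0^+$ for every $z$. It is non-elliptic if $\phi_t(z)\neq z$ for all $z\in\mathbb{H}$, $t>0$; then all orbits $\phi_t(z)$ converge as $t\to+\infty$ to a common boundary point, the Denjoy--Wolff point. With Denjoy--Wolff point $\infty$, there is $\lambda\ge0$ with $\angle\lim_{z\to\infty}\phi_t(z)/z=e^{\lambda t}$ for all $t$; the semigroup is parabolic if $\lambda=0$. The infinitesimal generator is the holomorphic map $G$ with $\partial_t\phi_t(z)=G(\phi_t(z))$ for all $z\in\mathbb{H}$, $t\ge0$; for non-elliptic semigroups with Denjoy--Wolff point $\infty$, $G$ maps $\mathbb{H}$ into $\mathbb{H}\cup\mathbb{R}$ and has a unique Herglotz representation as displayed. *)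

theory Defs
  imports "HOL-Complex_Analysis.Complex_Analysis"
begin

definition UHP :: "complex set" where
  "UHP = {z. Im z > 0}"

definition semigroup_H :: "(real \<Rightarrow> complex \<Rightarrow> complex) \<Rightarrow> bool" where
  "semigroup_H phi \<longleftrightarrow>
     (\<forall>t\<ge>0. phi t holomorphic_on UHP \<and> phi t ` UHP \<subseteq> UHP) \<and>
     (\<forall>z\<in>UHP. phi 0 z = z) \<and>
     (\<forall>t\<ge>0. \<forall>s\<ge>0. \<forall>z\<in>UHP. phi (t + s) z = phi t (phi s z)) \<and>
     (\<forall>z\<in>UHP. ((\<lambda>t. phi t z) \<longlongrightarrow> z) (at_right 0))"

definition non_elliptic :: "(real \<Rightarrow> complex \<Rightarrow> complex) \<Rightarrow> bool" where
  "non_elliptic phi \<longleftrightarrow> (\<forall>t>0. \<forall>z\<in>UHP. phi t z \<noteq> z)"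

definition DW_infinity :: "(real \<Rightarrow> complex \<Rightarrow> complex) \<Rightarrow> bool" where
  "DW_infinity phi \<longleftrightarrow> (\<forall>z\<in>UHP. filterlim (\<lambda>t. phi t z) at_infinity at_top)"

definition stolz_sector :: "real \<Rightarrow> complex set" where
  "stolz_sector e = {z. Im z > 0 \<and> e \<le> Arg z \<and> Arg z \<le> pi - e}"

definition angular_lim_infty :: "(complex \<Rightarrow> complex) \<Rightarrow> complex \<Rightarrow> bool" where
  "angular_lim_infty f L \<longleftrightarrow>
     (\<forall>e. 0 < e \<and> e < pi / 2 \<longrightarrow> (f \<longlongrightarrow> L) (inf at_infinity (principal (stolz_sector e))))"

text \<open>Parabolic: the angular derivative at infinity e^(lambda t) equals 1, i.e. lambda = 0.\<close>
definition parabolic :: "(real \<Rightarrow> complex \<Rightarrow> complex) \<Rightarrow> bool" where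
  "parabolic phi \<longleftrightarrow> (\<forall>t\<ge>0. angular_lim_infty (\<lambda>z. phi t z / z) 1)"

definition inf_generator :: "(real \<Rightarrow> complex \<Rightarrow> complex) \<Rightarrow> (complex \<Rightarrow> complex) \<Rightarrow> bool" where
  "inf_generator phi G \<longleftrightarrow> G holomorphic_on UHP \<and>
     (\<forall>z\<in>UHP. \<forall>t\<ge>0. ((\<lambda>s. phi s z) has_vector_derivative G (phi t z)) (at t within {0..}))"

end

theory Submission
  imports Defs
begin

lemma meas_M:
  assumes "sets M = sets borel" and "f \<in> borel_measurable borel"
  shows "f \<in> borel_measurable M"
  using assms measurable_cong_sets by blast

definition kk :: "complex \<Rightarrow> real \<Rightarrow> complex" where
  "kk w s = of_real (1 + s\<^sup>2) / (of_real s - w)"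

lemma kk_meas: "kk w \<in> borel_measurable borel"
  unfolding kk_def by measurable

lemma norm_diff_ge_Im: "Im w > 0 \<Longrightarrow> Im w \<le> cmod (of_real s - w)"
  using abs_Im_le_cmod[of "of_real s - w"] by simp

lemma norm_kk: assumes "Im w > 0" shows "norm (kk w s) \<le> (1 + s\<^sup>2) / Im w"
proof -
  have "norm (kk w s) = (1 + s\<^sup>2) / cmod (of_real s - w)"
    unfolding kk_def norm_divide norm_of_real by (simp add: add_nonneg_nonneg)
  also have "\<dots> \<le> (1 + s\<^sup>2) / Im w"
    using norm_diff_ge_Im[OF assms, of s] assms by (intro divide_left_mono mult_pos_pos) (auto simp: add_pos_nonneg)
  finally show ?thesis .
qed

lemma abs_le_1sq: "\<bar>x::real\<bar> \<le> 1 + x\<^sup>2"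
proof -
  have "0 \<le> (\<bar>x\<bar> - 1)\<^sup>2" by simp
  hence "0 \<le> \<bar>x\<bar>\<^sup>2 - 2 * \<bar>x\<bar> + 1" by (simp add: power2_eq_square algebra_simps)
  thus ?thesis by simp
qed

lemma ineqD:
  fixes a y s R :: real
  assumes R: "R > 0" and a: "a \<ge> 2*R" and y: "0 < y" "y \<le> a"
  shows "(s - 2*a) / ((s - a)\<^sup>2 + y\<^sup>2) \<le> (if \<bar>s\<bar> \<le> R then -1/(3*a) else 1/a)"
proof -
  have apos: "a > 0" using R a by linarith
  have Dpos: "(s - a)\<^sup>2 + y\<^sup>2 > 0" using y by (simp add: add_nonneg_pos)
  show ?thesis
  proof (cases "\<bar>s\<bar> \<le> R")
    case True
    have "\<bar>s - a\<bar> \<le> 3*a/2" using True a apos by linarith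
    hence "(s - a)\<^sup>2 \<le> (3*a/2)\<^sup>2" using apos by (subst abs_le_square_iff[symmetric]) simp
    moreover have "y\<^sup>2 \<le> a\<^sup>2" using y by (simp add: power_mono)
    moreover have "3*a*(s - 2*a) \<le> 3*a*(-3*a/2)" using True a apos by (intro mult_left_mono) auto
    moreover have "(s - a)\<^sup>2 = s * s - 2 * (a * s) + a * a" "3 * a * (s - 2 * a) = 3 * (a * s) - 6 * (a * a)"
      "(3 * a/2)\<^sup>2 = 9/4 * (a * a)" "3 * a * (-3 * a/2) = -9/2 * (a * a)" "y\<^sup>2 = y * y" "a\<^sup>2 = a * a" "a * a \<ge> 0"
      by (simp_all add: power2_eq_square algebra_simps)
    ultimately have "3*a*(s - 2*a) \<le> - ((s - a)\<^sup>2 + y\<^sup>2)" by linarith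
    hence "(s - 2*a) / ((s - a)\<^sup>2 + y\<^sup>2) \<le> -1/(3*a)"
      using Dpos apos by (simp add: divide_simps) (simp add: algebra_simps)
    thus ?thesis using True by simp
  next
    case False
    show ?thesis
    proof (cases "s \<le> 2*a")
      case True
      hence "(s - 2*a) / ((s - a)\<^sup>2 + y\<^sup>2) \<le> 0" using Dpos by (simp add: divide_nonpos_pos)
      also have "\<dots> \<le> 1/a" using apos by simp
      finally show ?thesis using False by simp
    next
      case s2: False
      have "(s - 2*a) / ((s - a)\<^sup>2 + y\<^sup>2) \<le> (s - a) / (s - a)\<^sup>2"
        using s2 apos y by (intro frac_le) (auto simp: power2_eq_square)
      also have "\<dots> = 1 / (s - a)" using s2 apos by (simp add: power2_eq_square)
      also have "\<dots> \<le> 1 / a" using s2 apos by (intro divide_left_mono) auto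
      finally show ?thesis using False by simp
    qed
  qed
qed

lemma ratio_bound:
  assumes y: "Im w > 0" and b: "cmod w \<le> D * Im w" and D: "D \<ge> 1"
  shows "\<bar>s\<bar> \<le> (2*D+2) * cmod (of_real s - w)"
proof -
  define n where "n = cmod (of_real s - w)"
  have n1: "Im w \<le> n" unfolding n_def by (rule norm_diff_ge_Im[OF y])
  have n2: "\<bar>s\<bar> \<le> n + cmod w"
    using norm_triangle_ineq[of "of_real s - w" w] unfolding n_def by simp
  have n0: "n \<ge> 0" unfolding n_def by simp
  show ?thesis
  proof (cases "\<bar>s\<bar> \<le> 2 * cmod w")
    case True
    have "D * Im w \<le> D * n" using n1 D by (intro mult_left_mono) auto
    hence "\<bar>s\<bar> \<le> 2 * D * n" using True b by linarith
    moreover have "2 * D * n \<le> (2*D+2) * n" using n0 by (intro mult_right_mono) auto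
    ultimately show ?thesis unfolding n_def by linarith
  next
    case False
    hence "\<bar>s\<bar> \<le> 2 * n" using n2 by linarith
    moreover have "2 * n \<le> (2*D+2) * n" using n0 D by (intro mult_right_mono) auto
    ultimately show ?thesis unfolding n_def by linarith
  qed
qed

locale msetup =
  fixes M :: "real measure"
  assumes fin: "finite_measure M" and sets_M: "sets M = sets borel"
    and sq: "integrable M (\<lambda>s. s\<^sup>2)"
begin

lemma measM: "f \<in> borel_measurable borel \<Longrightarrow> f \<in> borel_measurable M"
  using meas_M[OF sets_M] .

lemma int_one_sq: "integrable M (\<lambda>s. 1 + s\<^sup>2)"
  by (rule Bochner_Integration.integrable_add[OF finite_measure.integrable_const[OF fin] sq])

lemma int_s: "integrable M (\<lambda>s. s)"
  by (rule Bochner_Integration.integrable_bound[OF int_one_sq]) (auto intro!: measM AE_I2 simp: abs_le_1sq)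

lemma int_kk: "Im w > 0 \<Longrightarrow> integrable M (kk w)"
  apply (rule Bochner_Integration.integrable_bound[of _ "\<lambda>s. (1 + s\<^sup>2) / Im w"])
  using int_one_sq apply simp
   apply (rule measM, rule kk_meas)
  apply (rule AE_I2)
  using norm_kk[of w] by (auto simp: add_pos_nonneg)


lemma int_aux: assumes "Im w > 0" shows "integrable M (\<lambda>s. (1 + of_real s * w) / (of_real s - w))"
proof (rule Bochner_Integration.integrable_bound[OF finite_measure.integrable_const[OF fin, of "cmod w + cmod (1 + w\<^sup>2) / Im w"]])
  show "(\<lambda>s. (1 + of_real s * w) / (of_real s - w)) \<in> borel_measurable M"
    by (rule measM) measurable
  show "AE s in M. norm ((1 + of_real s * w) / (of_real s - w)) \<le> norm (cmod w + cmod (1 + w\<^sup>2) / Im w)"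
  proof (rule AE_I2)
    fix s
    have ne: "of_real s - w \<noteq> 0" using assms by (metis Im_complex_of_real less_irrefl right_minus_eq)
    have eq: "(1 + of_real s * w) / (of_real s - w) = w + (1 + w\<^sup>2) / (of_real s - w)"
      using ne by (simp add: field_simps power2_eq_square)
    have "norm ((1 + w\<^sup>2) / (of_real s - w)) \<le> cmod (1 + w\<^sup>2) / Im w"
      unfolding norm_divide using norm_diff_ge_Im[OF assms, of s] assms
      by (intro divide_left_mono mult_pos_pos) auto
    hence "norm ((1 + of_real s * w) / (of_real s - w)) \<le> cmod w + cmod (1 + w\<^sup>2) / Im w"
      unfolding eq by (meson norm_triangle_le add_left_mono order_trans norm_triangle_ineq)
    thus "norm ((1 + of_real s * w) / (of_real s - w)) \<le> norm (cmod w + cmod (1 + w\<^sup>2) / Im w)"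
      by simp
  qed
qed

lemma G_eq: assumes "Im w > 0"
  shows "of_real 0 * w + of_real (LINT s|M. s) + (LINT s|M. (1 + of_real s * w) / (of_real s - w)) = integral\<^sup>L M (kk w)"
proof -
  have "of_real (LINT s|M. s) + (LINT s|M. (1 + of_real s * w) / (of_real s - w))
      = (LINT s|M. of_real s + (1 + of_real s * w) / (of_real s - w))"
    using int_aux[OF assms] int_s by (simp add: integrable_of_real)
  also have "\<dots> = integral\<^sup>L M (kk w)"
  proof (rule Bochner_Integration.integral_cong[OF refl])
    fix s
    have ne: "of_real s - w \<noteq> 0" using assms by (metis Im_complex_of_real less_irrefl right_minus_eq)
    show "of_real s + (1 + of_real s * w) / (of_real s - w) = kk w s"
      unfolding kk_def using ne by (simp add: field_simps power2_eq_square)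
  qed
  finally show ?thesis by simp
qed

definition VV where "VV = (LINT s|M. 1 + s\<^sup>2)"
definition EE where "EE w = (LINT s|M. of_real (1 + s\<^sup>2) * of_real s / (of_real s - w))"

lemma wK: assumes "Im w > 0" shows "w * integral\<^sup>L M (kk w) = EE w - of_real VV"
proof -
  have "EE w = (LINT s|M. w * kk w s + of_real (1 + s\<^sup>2))"
  proof (unfold EE_def, rule Bochner_Integration.integral_cong[OF refl])
    fix s
    have ne: "of_real s - w \<noteq> 0" using assms by (metis Im_complex_of_real less_irrefl right_minus_eq)
    show "of_real (1 + s\<^sup>2) * of_real s / (of_real s - w) = w * kk w s + of_real (1 + s\<^sup>2)"
      unfolding kk_def using ne by (simp add: field_simps)
  qed
  also have "\<dots> = (LINT s|M. w * kk w s) + (LINT s|M. complex_of_real (1 + s\<^sup>2))"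
    by (rule Bochner_Integration.integral_add) (use int_kk[OF assms] integrable_of_real[OF int_one_sq] in auto)
  also have "\<dots> = w * integral\<^sup>L M (kk w) + of_real VV"
    unfolding VV_def by (simp only: integral_mult_right_zero integral_complex_of_real)
  finally show ?thesis by simp
qed

lemma Im_cnj_kk: "Im w > 0 \<Longrightarrow> Im (cnj w * kk w s) = (1 + s\<^sup>2) * Im w * (2 * Re w - s) / ((s - Re w)\<^sup>2 + (Im w)\<^sup>2)"
  by (cases w) (simp add: kk_def Im_divide Re_divide field_simps power2_eq_square)

lemma Im_cnj_K: "Im w > 0 \<Longrightarrow> Im (cnj w * integral\<^sup>L M (kk w)) = (LINT s|M. Im (cnj w * kk w s))"
  using int_kk[of w] by simp

definition tailf :: "real \<Rightarrow> real \<Rightarrow> real" where "tailf R s = (if R < \<bar>s\<bar> then 1 + s\<^sup>2 else 0)"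
definition coref :: "real \<Rightarrow> real \<Rightarrow> real" where "coref R s = (if \<bar>s\<bar> \<le> R then 1 + s\<^sup>2 else 0)"

lemma tailf_meas: "tailf R \<in> borel_measurable M"
  unfolding tailf_def by (rule measM) measurable
lemma coref_meas: "coref R \<in> borel_measurable M"
  unfolding coref_def by (rule measM) measurable

lemma int_tailf: "integrable M (tailf R)"
  by (rule Bochner_Integration.integrable_bound[OF int_one_sq tailf_meas]) (auto simp: tailf_def add_nonneg_nonneg)
lemma int_coref: "integrable M (coref R)"
  by (rule Bochner_Integration.integrable_bound[OF int_one_sq coref_meas]) (auto simp: coref_def add_nonneg_nonneg)

lemma core_tail: "(LINT s|M. coref R s) = VV - (LINT s|M. tailf R s)"
proof -
  have "(LINT s|M. coref R s) + (LINT s|M. tailf R s) = (LINT s|M. coref R s + tailf R s)"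
    using int_coref int_tailf by simp
  also have "\<dots> = VV" unfolding VV_def
    by (rule Bochner_Integration.integral_cong) (auto simp: coref_def tailf_def)
  finally show ?thesis by simp
qed

lemma tail_small: assumes "c > 0" shows "\<exists>R>0. (LINT s|M. tailf R s) \<le> c"
proof -
  have "((\<lambda>R. LINT s|M. tailf R s) \<longlongrightarrow> (LINT s|M. (0::real))) at_top"
  proof (rule integral_dominated_convergence_at_top[where w="\<lambda>s. 1 + s\<^sup>2"])
    show "(\<lambda>s. 0::real) \<in> borel_measurable M" by simp
    show "tailf R \<in> borel_measurable M" for R by (rule tailf_meas)
    show "integrable M (\<lambda>s. 1 + s\<^sup>2)" by (rule int_one_sq)
    show "AE s in M. ((\<lambda>R. tailf R s) \<longlongrightarrow> 0) at_top"
    proof (rule AE_I2)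
      fix s
      have "\<forall>\<^sub>F R in at_top. tailf R s = 0"
        using eventually_ge_at_top[of "\<bar>s\<bar>"] by eventually_elim (auto simp: tailf_def)
      thus "((\<lambda>R. tailf R s) \<longlongrightarrow> 0) at_top" by (rule tendsto_eventually)
    qed
    show "\<forall>\<^sub>F R in at_top. AE s in M. norm (tailf R s) \<le> 1 + s\<^sup>2"
      by (intro always_eventually allI AE_I2) (auto simp: tailf_def add_nonneg_nonneg)
  qed
  hence "\<forall>\<^sub>F R in at_top. (LINT s|M. tailf R s) < c" using assms by (simp add: order_tendstoD(2))
  hence "\<forall>\<^sub>F R in at_top. (LINT s|M. tailf R s) < c \<and> R > 0" using eventually_gt_at_top[of 0]
    by eventually_elim auto
  then obtain R where "(LINT s|M. tailf R s) < c" "R > 0" using eventually_happens by fastforce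
  thus ?thesis by (intro exI[of _ R]) auto
qed

lemma pointwise_sign:
  assumes R: "R > 0" and sig: "\<sigma> = 1 \<or> \<sigma> = -1" and y: "Im w > 0" "Im w \<le> \<sigma> * Re w"
    and a: "2*R \<le> \<sigma> * Re w"
  shows "Im w / (\<sigma> * Re w) * ((1/3) * coref R s - tailf R s) \<le> \<sigma> * Im (cnj w * kk w s)"
proof -
  define x where "x = Re w"
  define yy where "yy = Im w"
  define A where "A = \<sigma> * x"
  define s' where "s' = \<sigma> * s"
  have Apos: "A > 0" using R a unfolding A_def x_def by linarith
  have ss: "\<sigma> * \<sigma> = 1" using sig by auto
  have abs_s': "\<bar>s'\<bar> = \<bar>s\<bar>" using sig unfolding s'_def by auto
  have sq: "(s - x)\<^sup>2 = (s' - A)\<^sup>2"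
  proof -
    have "s' - A = \<sigma> * (s - x)" unfolding s'_def A_def by (simp add: algebra_simps)
    hence "(s' - A)\<^sup>2 = \<sigma>\<^sup>2 * (s - x)\<^sup>2" by (simp add: power_mult_distrib)
    thus ?thesis using ss by (simp add: power2_eq_square)
  qed
  have num: "\<sigma> * (2 * x - s) = 2 * A - s'" unfolding A_def s'_def by (simp add: algebra_simps)
  have Dpos: "(s' - A)\<^sup>2 + yy\<^sup>2 > 0" using y unfolding yy_def by (simp add: add_nonneg_pos)
  define b where "b = (if \<bar>s'\<bar> \<le> R then -1/(3*A) else 1/A)"
  have ib: "(s' - 2*A) / ((s' - A)\<^sup>2 + yy\<^sup>2) \<le> b"
    unfolding b_def by (rule ineqD[OF R]) (use a y in \<open>auto simp: A_def x_def yy_def\<close>)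
  have "- b \<le> (2*A - s') / ((s' - A)\<^sup>2 + yy\<^sup>2)"
  proof -
    have "(2*A - s') / ((s' - A)\<^sup>2 + yy\<^sup>2) = - ((s' - 2*A) / ((s' - A)\<^sup>2 + yy\<^sup>2))"
      by (simp add: minus_divide_left)
    thus ?thesis using ib by linarith
  qed
  hence "(1 + s\<^sup>2) * yy * (- b) \<le> (1 + s\<^sup>2) * yy * ((2*A - s') / ((s' - A)\<^sup>2 + yy\<^sup>2))"
    using y unfolding yy_def by (intro mult_left_mono) (auto simp: add_nonneg_nonneg)
  moreover have "(1 + s\<^sup>2) * yy * (- b) = yy / A * ((1/3) * coref R s - tailf R s)"
    unfolding b_def coref_def tailf_def abs_s' using Apos by (auto simp: field_simps)
  moreover have "\<sigma> * Im (cnj w * kk w s) = (1 + s\<^sup>2) * yy * ((2*A - s') / ((s' - A)\<^sup>2 + yy\<^sup>2))"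
    unfolding Im_cnj_kk[OF y(1)] num[symmetric] sq[symmetric] x_def[symmetric] yy_def[symmetric] by simp
  ultimately show ?thesis unfolding A_def x_def yy_def by simp
qed

lemma sign_lemma:
  assumes R: "R > 0" and tail: "(LINT s|M. tailf R s) \<le> VV/8" and VVp: "VV > 0"
    and sig: "\<sigma> = 1 \<or> \<sigma> = -1" and y: "Im w > 0" "Im w \<le> \<sigma> * Re w"
    and a: "2*R \<le> \<sigma> * Re w"
  shows "\<sigma> * Im (cnj w * integral\<^sup>L M (kk w)) > 0"
proof -
  define A where "A = \<sigma> * Re w"
  have Apos: "A > 0" using R a unfolding A_def by linarith
  define T where "T = (LINT s|M. tailf R s)"
  have "0 < Im w / A * ((1/3) * (VV - T) - T)"
    using Apos y VVp tail unfolding T_def by (intro mult_pos_pos divide_pos_pos) auto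
  also have "\<dots> = (LINT s|M. Im w / A * ((1/3) * coref R s - tailf R s))"
    using int_coref int_tailf unfolding T_def core_tail[symmetric] by simp
  also have "\<dots> \<le> (LINT s|M. \<sigma> * Im (cnj w * kk w s))"
  proof (rule integral_mono)
    show "integrable M (\<lambda>s. Im w / A * ((1/3) * coref R s - tailf R s))"
      using int_coref int_tailf by simp
    show "integrable M (\<lambda>s. \<sigma> * Im (cnj w * kk w s))"
      using int_kk[OF y(1)] by simp
    show "Im w / A * ((1/3) * coref R s - tailf R s) \<le> \<sigma> * Im (cnj w * kk w s)" for s
      unfolding A_def by (rule pointwise_sign[OF R sig y a])
  qed
  also have "\<dots> = \<sigma> * Im (cnj w * integral\<^sup>L M (kk w))"
    using Im_cnj_K[OF y(1)] by simp
  finally show ?thesis .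
qed

lemma EE_lim:
  fixes w :: "real \<Rightarrow> complex"
  assumes pos: "\<And>t. t \<ge> T0 \<Longrightarrow> Im (w t) > 0"
    and bnd: "\<And>t. t \<ge> T0 \<Longrightarrow> cmod (w t) \<le> D * Im (w t)" and D: "D \<ge> 1"
    and inf: "filterlim w at_infinity at_top"
  shows "((\<lambda>t. EE (w t)) \<longlongrightarrow> 0) at_top"
proof -
  have "((\<lambda>t. LINT s|M. of_real (1 + s\<^sup>2) * of_real s / (of_real s - w t)) \<longlongrightarrow> (LINT s|M. (0::complex))) at_top"
  proof (rule integral_dominated_convergence_at_top[where w="\<lambda>s. (1 + s\<^sup>2) * (2*D+2)"])
    show "(\<lambda>s. 0::complex) \<in> borel_measurable M" by simp
    show "(\<lambda>s. of_real (1 + s\<^sup>2) * of_real s / (of_real s - w t)) \<in> borel_measurable M" for t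
      by (rule measM) measurable
    show "integrable M (\<lambda>s. (1 + s\<^sup>2) * (2*D+2))" using int_one_sq by simp
    show "AE s in M. ((\<lambda>t. of_real (1 + s\<^sup>2) * of_real s / (of_real s - w t)) \<longlongrightarrow> 0) at_top"
    proof (rule AE_I2)
      fix s :: real
      have "filterlim (\<lambda>t. w t + (- of_real s)) at_infinity at_top"
        by (rule tendsto_add_filterlim_at_infinity'[OF inf tendsto_const])
      hence "filterlim (\<lambda>t. norm (w t + (- of_real s))) at_top at_top"
        by (rule filterlim_at_infinity_imp_norm_at_top)
      hence "filterlim (\<lambda>t. norm (of_real s - w t)) at_top at_top"
        by (simp add: norm_minus_commute)
      hence "filterlim (\<lambda>t. of_real s - w t) at_infinity at_top"
        using filterlim_at_infinity_conv_norm_at_top by blast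
      thus "((\<lambda>t. of_real (1 + s\<^sup>2) * of_real s / (of_real s - w t)) \<longlongrightarrow> 0) at_top"
        by (rule tendsto_divide_0[OF tendsto_const])
    qed
    show "\<forall>\<^sub>F t in at_top. AE s in M. norm (of_real (1 + s\<^sup>2) * of_real s / (of_real s - w t)) \<le> (1 + s\<^sup>2) * (2*D+2)"
      using eventually_ge_at_top[of T0]
    proof eventually_elim
      case (elim t)
      show ?case
      proof (rule AE_I2)
        fix s :: real
        have y: "Im (w t) > 0" using pos elim by auto
        have np: "cmod (of_real s - w t) > 0" using norm_diff_ge_Im[OF y, of s] y by linarith
        have rb: "\<bar>s\<bar> \<le> (2*D+2) * cmod (of_real s - w t)"
          by (rule ratio_bound[OF y bnd[OF elim] D])
        have "norm (of_real (1 + s\<^sup>2) * of_real s / (of_real s - w t)) = (1 + s\<^sup>2) * (\<bar>s\<bar> / cmod (of_real s - w t))"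
          unfolding norm_divide norm_mult norm_of_real by (simp add: add_nonneg_nonneg)
        also have "\<dots> \<le> (1 + s\<^sup>2) * (2*D+2)"
          using rb np by (intro mult_left_mono) (auto simp: divide_simps add_nonneg_nonneg)
        finally show "norm (of_real (1 + s\<^sup>2) * of_real s / (of_real s - w t)) \<le> (1 + s\<^sup>2) * (2*D+2)" .
      qed
    qed
  qed
  thus ?thesis unfolding EE_def by simp
qed

end
lemma barrier:
  fixes f f' :: "real \<Rightarrow> real"
  assumes der: "\<And>t. t \<ge> T0 \<Longrightarrow> (f has_real_derivative f' t) (at t)"
    and neg: "\<And>t. t \<ge> T0 \<Longrightarrow> f t \<ge> 1 \<Longrightarrow> f' t < 0"
    and t: "t \<ge> T0"
  shows "f t \<le> max 1 (f T0)"
proof (rule ccontr)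
  assume "\<not> f t \<le> max 1 (f T0)"
  hence ft: "f t > max 1 (f T0)" by linarith
  have cont: "continuous_on {T0..t} f"
    using der by (intro continuous_at_imp_continuous_on ballI DERIV_isCont) auto
  obtain m where m: "m \<in> {T0..t}" and mmax: "\<And>y. y \<in> {T0..t} \<Longrightarrow> f y \<le> f m"
    using continuous_attains_sup[OF compact_Icc _ cont] t by auto
  have fm: "f m > max 1 (f T0)" using mmax[of t] t ft by auto
  hence "f' m < 0" using neg[of m] m by auto
  then obtain d where d: "d > 0" and dd: "\<And>h. h > 0 \<Longrightarrow> h < d \<Longrightarrow> f m < f (m - h)"
    using DERIV_neg_dec_left[OF der[of m]] m by auto
  have "m \<noteq> T0" using fm by auto
  hence mT: "m > T0" using m by auto
  define h where "h = min (d/2) ((m - T0)/2)"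
  have h1: "h \<le> (m - T0)/2" "h \<le> d/2" "h > 0" using d mT unfolding h_def by (simp_all only: min.cobounded1 min.cobounded2) simp
  have h: "h > 0" "h < d" "m - h \<in> {T0..t}" using h1 d mT m by auto
  have "f m < f (m - h)" using dd h by auto
  moreover have "f (m - h) \<le> f m" using mmax h by auto
  ultimately show False by simp
qed
lemma W_asym:
  fixes W E :: "real \<Rightarrow> complex" and c :: complex
  assumes der: "\<And>t. t \<ge> T \<Longrightarrow> (W has_vector_derivative (c + E t)) (at t within {T..})"
    and E: "(E \<longlongrightarrow> 0) at_top"
  shows "((\<lambda>t. W t / of_real t) \<longlongrightarrow> c) at_top"
proof (rule tendstoI)
  fix e :: real assume e: "e > 0"
  have "\<forall>\<^sub>F t in at_top. dist (E t) 0 < e/2" using tendstoD[OF E, of "e/2"] e by auto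
  then obtain T2 where T2: "\<And>t. t \<ge> T2 \<Longrightarrow> norm (E t) < e/2"
    by (auto simp: eventually_at_top_linorder)
  define T1 where "T1 = max (max T T2) 1"
  have T1: "T1 \<ge> T" "T1 \<ge> T2" "T1 \<ge> 1" unfolding T1_def by auto
  define h where "h t = W t - of_real t * c" for t
  have hder: "(h has_derivative (\<lambda>s. s *\<^sub>R E t)) (at t within {T1..})" if "t \<in> {T1..}" for t
  proof -
    have "(W has_vector_derivative (c + E t)) (at t within {T1..})"
      using der[of t] that T1 by (auto intro: has_vector_derivative_within_subset)
    hence "(h has_vector_derivative (c + E t - 1 * c)) (at t within {T1..})"
      unfolding h_def by (auto intro!: derivative_eq_intros)
    thus ?thesis by (simp add: has_vector_derivative_def)
  qed
  have hb: "norm (h t - h T1) \<le> e/2 * norm (t - T1)" if "t \<ge> T1" for t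
  proof (rule differentiable_bound[of "{T1..}" h "\<lambda>t s. s *\<^sub>R E t"])
    show "convex {T1..}" by simp
    show "(h has_derivative (\<lambda>s. s *\<^sub>R E x)) (at x within {T1..})" if "x \<in> {T1..}" for x
      using hder that by auto
    show "onorm (\<lambda>s. s *\<^sub>R E x) \<le> e/2" if "x \<in> {T1..}" for x
    proof (rule onorm_bound)
      show "0 \<le> e/2" using e by simp
      fix s :: real
      have "norm (E x) \<le> e/2" using T2[of x] that T1 by auto
      hence "\<bar>s\<bar> * norm (E x) \<le> \<bar>s\<bar> * (e/2)" by (rule mult_left_mono) auto
      thus "norm (s *\<^sub>R E x) \<le> e/2 * norm s"
        by (simp add: mult.commute)
    qed
  qed (use that in auto)
  define B where "B = 2 * norm (h T1) / e + 1"
  show "\<forall>\<^sub>F t in at_top. dist (W t / of_real t) c < e"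
    unfolding eventually_at_top_linorder
  proof (intro exI[of _ "max T1 B"] allI impI)
    fix t assume t: "t \<ge> max T1 B"
    have tpos: "t > 0" using t T1 by auto
    have "W t / of_real t - c = (h T1 + (h t - h T1)) / of_real t"
      unfolding h_def using tpos by (simp add: field_simps)
    hence "dist (W t / of_real t) c = norm (h T1 + (h t - h T1)) / t"
      using tpos by (simp add: dist_norm norm_divide)
    also have "\<dots> \<le> (norm (h T1) + e/2 * (t - T1)) / t"
      using hb[of t] t tpos norm_triangle_ineq[of "h T1" "h t - h T1"]
      by (intro divide_right_mono) auto
    also have "\<dots> = norm (h T1) / t + e/2 * (t - T1) / t" by (simp add: add_divide_distrib)
    also have "\<dots> < e/2 + e/2"
    proof (rule add_less_le_mono)
      have "norm (h T1) < e/2 * t"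
        using t e unfolding B_def by (simp add: field_simps)
      thus "norm (h T1) / t < e/2" using tpos by (simp add: divide_simps)
      show "e/2 * (t - T1) / t \<le> e/2" using tpos e T1 by (simp add: divide_simps)
    qed
    finally show "dist (W t / of_real t) c < e" by simp
  qed
qed
lemma Arg_lim:
  fixes w :: "real \<Rightarrow> complex" and V :: real
  assumes V: "V > 0" and pos: "\<And>t. t \<ge> 0 \<Longrightarrow> Im (w t) > 0"
    and lim: "((\<lambda>t. (w t)\<^sup>2 / of_real t) \<longlongrightarrow> - of_real (2 * V)) at_top"
  shows "((\<lambda>t. Arg (w t)) \<longlongrightarrow> pi / 2) at_top"
proof -
  define x where "x t = Re (w t)" for t
  define y where "y t = Im (w t)" for t
  have ReL: "((\<lambda>t. Re ((w t)\<^sup>2 / of_real t)) \<longlongrightarrow> - 2 * V) at_top"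
    using tendsto_Re[OF lim] by simp
  have ImL: "((\<lambda>t. Im ((w t)\<^sup>2 / of_real t)) \<longlongrightarrow> 0) at_top"
    using tendsto_Im[OF lim] by simp
  have ev1: "\<forall>\<^sub>F t in at_top. Re ((w t)\<^sup>2 / of_real t) < - V"
    using order_tendstoD(2)[OF ReL, of "-V"] V by simp
  have ev2: "\<forall>\<^sub>F t in at_top. norm (x t / y t) \<le> \<bar>Im ((w t)\<^sup>2 / of_real t)\<bar> / (2 * V)"
    using ev1 eventually_gt_at_top[of 0]
  proof eventually_elim
    case (elim t)
    have yp: "y t > 0" using pos[of t] elim unfolding y_def by auto
    have Req: "Re ((w t)\<^sup>2 / of_real t) = ((x t)\<^sup>2 - (y t)\<^sup>2) / t"
      unfolding x_def y_def by (simp add: power2_eq_square)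
    have Imq: "Im ((w t)\<^sup>2 / of_real t) = 2 * x t * y t / t"
      unfolding x_def y_def by (simp add: power2_eq_square)
    have "((x t)\<^sup>2 - (y t)\<^sup>2) / t < -V" using elim Req by simp
    hence "(x t)\<^sup>2 - (y t)\<^sup>2 < -V * t" using elim by (simp add: divide_simps)
    hence yb: "V * t \<le> (y t)\<^sup>2" using zero_le_power2[of "x t"] by linarith
    have "norm (x t / y t) = \<bar>x t\<bar> / y t" using yp by (simp add: abs_divide)
    also have "\<dots> = \<bar>2 * x t * y t / t\<bar> * (t / (2 * (y t)\<^sup>2))"
      using yp elim by (simp add: abs_mult abs_divide power2_eq_square field_simps)
    also have "\<dots> \<le> \<bar>2 * x t * y t / t\<bar> * (1 / (2 * V))"
    proof (rule mult_left_mono)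
      show "t / (2 * (y t)\<^sup>2) \<le> 1 / (2 * V)"
        using yb yp V elim by (simp add: divide_simps) (simp add: mult.commute)
    qed simp
    finally have "norm (x t / y t) \<le> \<bar>2 * x t * y t / t\<bar> * (1 / (2 * V))" .
    thus ?case unfolding Imq by simp
  qed
  have xy0: "((\<lambda>t. x t / y t) \<longlongrightarrow> 0) at_top"
    by (rule Lim_null_comparison[OF ev2]) (use tendsto_divide[OF tendsto_rabs[OF ImL] tendsto_const[of "2*V"]] V in simp)
  have L: "((\<lambda>t. of_real (x t / y t) + \<i>) \<longlongrightarrow> 0 + \<i>) at_top"
    using tendsto_add[OF tendsto_of_real[OF xy0, where 'a=complex] tendsto_const[of "\<i>"]] by simp
  have cA: "isCont Arg \<i>"
    by (rule continuous_at_Arg) (auto simp: complex_nonpos_Reals_iff)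
  have "((\<lambda>t. Arg (of_real (x t / y t) + \<i>)) \<longlongrightarrow> Arg \<i>) at_top"
    using isCont_tendsto_compose[OF cA] L by simp
  moreover have "\<forall>\<^sub>F t in at_top. Arg (of_real (x t / y t) + \<i>) = Arg (w t)"
    using eventually_ge_at_top[of 0]
  proof eventually_elim
    case (elim t)
    have yp: "y t > 0" using pos[of t] elim unfolding y_def by auto
    have "of_real (x t / y t) + \<i> = of_real (1 / y t) * w t"
      using yp unfolding x_def y_def by (simp add: complex_eq_iff)
    thus ?case using yp by simp
  qed
  ultimately show ?thesis using tendsto_cong by (force simp: Arg_ii)
qed

theorem lemma4p4:
  fixes phi :: "real \<Rightarrow> complex \<Rightarrow> complex"
    and G :: "complex \<Rightarrow> complex"
    and \<alpha> \<beta> :: real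
    and \<mu> :: "real measure"
  assumes "semigroup_H phi" and "non_elliptic phi" and "DW_infinity phi" and "parabolic phi"
    and "inf_generator phi G"
    and "finite_measure \<mu>" and "sets \<mu> = sets borel"
    and "\<alpha> \<ge> 0"
    and "\<forall>z\<in>UHP. G z = of_real \<alpha> * z + of_real \<beta> +
            (LINT s|\<mu>. (1 + of_real s * z) / (of_real s - z))"
    and "\<alpha> = 0"
    and "integrable \<mu> (\<lambda>s. s\<^sup>2)"
    and "\<beta> = (LINT s|\<mu>. s)"
  shows "\<forall>z\<in>UHP. filterlim (\<lambda>t. phi t z) at_infinity at_top \<and>
           ((\<lambda>t. Arg (phi t z)) \<longlongrightarrow> pi / 2) at_top"
proof (intro ballI conjI)
  fix z assume z: "z \<in> UHP"
  show inf0: "filterlim (\<lambda>t. phi t z) at_infinity at_top"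
    using assms(3) z unfolding DW_infinity_def by auto
  interpret msetup \<mu> by (rule msetup.intro[OF assms(6,7,11)])
  define w where "w t = phi t z" for t
  have inf: "filterlim w at_infinity at_top" using inf0 unfolding w_def .
  have inU: "w t \<in> UHP" if "t \<ge> 0" for t
  proof -
    have "\<forall>t\<ge>0. phi t holomorphic_on UHP \<and> phi t ` UHP \<subseteq> UHP"
      using assms(1) unfolding semigroup_H_def by (rule conjunct1)
    hence "phi t ` UHP \<subseteq> UHP" using that by simp
    thus ?thesis using z unfolding w_def by (rule subsetD[OF _ imageI])
  qed
  have pos: "Im (w t) > 0" if "t \<ge> 0" for t
    using inU[OF that] unfolding UHP_def by auto
  have Geq: "G (w t) = integral\<^sup>L \<mu> (kk (w t))" if "t \<ge> 0" for t
    using assms(9) inU[OF that] G_eq[OF pos[OF that]] assms(10,12) by simp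
  have der0: "(w has_vector_derivative integral\<^sup>L \<mu> (kk (w t))) (at t within {0..})" if "t \<ge> 0" for t
  proof -
    have "((\<lambda>s. phi s z) has_vector_derivative G (phi t z)) (at t within {0..})"
      using assms(5) z that unfolding inf_generator_def by blast
    thus ?thesis using Geq[OF that] unfolding w_def by simp
  qed
  have VVp: "VV > 0"
  proof (rule ccontr)
    assume "\<not> VV > 0"
    moreover have "VV \<ge> 0" unfolding VV_def by (simp add: add_nonneg_nonneg)
    ultimately have "VV = 0" by simp
    hence "AE s in \<mu>. 1 + s\<^sup>2 = 0"
      using integral_nonneg_eq_0_iff_AE[OF int_one_sq] unfolding VV_def by (simp add: add_nonneg_nonneg)
    hence AEF: "AE s in \<mu>. False" by (rule AE_mp) (auto intro!: AE_I2 simp: add_nonneg_eq_0_iff)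
    have K0: "integral\<^sup>L \<mu> (kk v) = 0" for v
      by (rule integral_eq_zero_AE) (use AEF in \<open>rule AE_mp\<close>, rule AE_I2, simp)
    have nb: "norm (w t - w 0) \<le> 0 * norm (t - 0)" if "t \<in> {0..}" for t
    proof (rule differentiable_bound[of "{0..}" w "\<lambda>t s. s *\<^sub>R 0"])
      show "convex {0::real..}" by simp
      show "(w has_derivative (\<lambda>s. s *\<^sub>R 0)) (at x within {0..})" if "x \<in> {0..}" for x
      proof -
        have "x \<ge> 0" using that by simp
        hence "(w has_vector_derivative 0) (at x within {0..})" using der0[of x] K0 by simp
        thus ?thesis unfolding has_vector_derivative_def .
      qed
      show "onorm (\<lambda>s::real. s *\<^sub>R (0::complex)) \<le> 0" for x
        by (rule onorm_bound) auto
    qed (use that in auto)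
    have wc: "w t = w 0" if "t \<ge> 0" for t
    proof -
      have "norm (w t - w 0) \<le> 0 * norm (t - 0)" using nb[of t] that by simp
      thus ?thesis by simp
    qed
    have "\<forall>\<^sub>F t in at_top. w t = w 0" using eventually_ge_at_top[of 0]
      by eventually_elim (rule wc)
    hence "(w \<longlongrightarrow> w 0) at_top" by (rule tendsto_eventually)
    moreover have "(at_top :: real filter) \<noteq> bot" by simp
    ultimately show False using not_tendsto_and_filterlim_at_infinity[OF _ _ inf] by blast
  qed
  obtain R where R: "R > 0" and tail: "(LINT s|\<mu>. tailf R s) \<le> VV/8"
    using tail_small[of "VV/8"] VVp by auto
  have "\<forall>\<^sub>F t in at_top. norm (w t) \<ge> 4 * R"
    using filterlim_at_infinity_imp_norm_at_top[OF inf] unfolding filterlim_at_top by blast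
  hence "\<forall>\<^sub>F t in at_top. norm (w t) \<ge> 4 * R \<and> t \<ge> 1" using eventually_ge_at_top[of 1]
    by eventually_elim auto
  then obtain T0 where T0: "\<And>t. t \<ge> T0 \<Longrightarrow> norm (w t) \<ge> 4 * R \<and> t \<ge> 1"
    by (auto simp: eventually_at_top_linorder)
  define K where "K t = integral\<^sup>L \<mu> (kk (w t))" for t
  define u where "u t = Re (w t) / Im (w t)" for t
  define u' where "u' t = - Im (cnj (w t) * K t) / (Im (w t))\<^sup>2" for t
  have derat: "(w has_vector_derivative K t) (at t)" if "t \<ge> T0" for t
  proof -
    have t0: "t > 0" using T0[OF that] by auto
    have "(w has_vector_derivative K t) (at t within {0<..})"
      using der0[of t] t0 unfolding K_def by (auto intro: has_vector_derivative_within_subset)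
    thus ?thesis using at_within_open[of t "{0<..}"] t0 by auto
  qed
  have uder: "(u has_real_derivative u' t) (at t)" if "t \<ge> T0" for t
  proof -
    have t0: "t \<ge> 0" using T0[OF that] by auto
    have dRe: "((\<lambda>t. Re (w t)) has_real_derivative Re (K t)) (at t)"
      using bounded_linear.has_vector_derivative[OF bounded_linear_Re derat[OF that]]
      by (simp add: has_real_derivative_iff_has_vector_derivative)
    have dIm: "((\<lambda>t. Im (w t)) has_real_derivative Im (K t)) (at t)"
      using bounded_linear.has_vector_derivative[OF bounded_linear_Im derat[OF that]]
      by (simp add: has_real_derivative_iff_has_vector_derivative)
    have "(u has_real_derivative (Re (K t) * Im (w t) - Re (w t) * Im (K t)) / (Im (w t) * Im (w t))) (at t)"
      unfolding u_def by (rule DERIV_divide[OF dRe dIm]) (use pos[OF t0] in auto)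
    thus ?thesis
      by (rule DERIV_cong) (simp add: u'_def power2_eq_square algebra_simps)
  qed
  have u_neg: "u' t < 0" if "t \<ge> T0" "u t \<ge> 1" for t
  proof -
    have t0: "t \<ge> 0" using T0[OF that(1)] by auto
    have y: "Im (w t) > 0" by (rule pos[OF t0])
    have xy: "Im (w t) \<le> 1 * Re (w t)" using that(2) y unfolding u_def by (simp add: divide_simps)
    have "cmod (w t) \<le> \<bar>Re (w t)\<bar> + \<bar>Im (w t)\<bar>" by (rule cmod_le)
    hence "2 * R \<le> 1 * Re (w t)" using T0[OF that(1)] xy y by auto
    hence "1 * Im (cnj (w t) * K t) > 0"
      unfolding K_def by (intro sign_lemma[OF R tail VVp _ y xy]) auto
    thus ?thesis unfolding u'_def using y by (simp add: divide_simps)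
  qed
  have mu_neg: "- u' t < 0" if "t \<ge> T0" "- u t \<ge> 1" for t
  proof -
    have t0: "t \<ge> 0" using T0[OF that(1)] by auto
    have y: "Im (w t) > 0" by (rule pos[OF t0])
    have xy: "Im (w t) \<le> -1 * Re (w t)" using that(2) y unfolding u_def by (simp add: divide_simps)
    have "cmod (w t) \<le> \<bar>Re (w t)\<bar> + \<bar>Im (w t)\<bar>" by (rule cmod_le)
    hence "2 * R \<le> -1 * Re (w t)" using T0[OF that(1)] xy y by auto
    hence "-1 * Im (cnj (w t) * K t) > 0"
      unfolding K_def by (intro sign_lemma[OF R tail VVp _ y xy]) auto
    thus ?thesis unfolding u'_def using y by (simp add: divide_simps)
  qed
  have ub1: "u t \<le> max 1 (u T0)" if "t \<ge> T0" for t
    by (rule barrier[OF uder u_neg that])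
  have ub2: "- u t \<le> max 1 (- u T0)" if "t \<ge> T0" for t
  proof (rule barrier[of T0 "\<lambda>t. - u t" "\<lambda>t. - u' t", OF _ mu_neg that])
    show "((\<lambda>t. - u t) has_real_derivative - u' t) (at t)" if "t \<ge> T0" for t
      using DERIV_minus[OF uder[OF that]] .
  qed
  define D where "D = max 1 (u T0) + max 1 (- u T0) + 1"
  have D1: "D \<ge> 1" unfolding D_def by auto
  have bnd: "cmod (w t) \<le> D * Im (w t)" if "t \<ge> T0" for t
  proof -
    have t0: "t \<ge> 0" using T0[OF that] by auto
    have y: "Im (w t) > 0" by (rule pos[OF t0])
    have "\<bar>u t\<bar> \<le> D - 1" using ub1[OF that] ub2[OF that] unfolding D_def by auto
    hence "\<bar>Re (w t)\<bar> \<le> (D - 1) * Im (w t)" using y unfolding u_def by (simp add: abs_divide divide_simps)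
    moreover have "cmod (w t) \<le> \<bar>Re (w t)\<bar> + \<bar>Im (w t)\<bar>" by (rule cmod_le)
    ultimately show ?thesis using y by (simp add: algebra_simps)
  qed
  have Elim: "((\<lambda>t. EE (w t)) \<longlongrightarrow> 0) at_top"
  proof (rule EE_lim[OF _ bnd D1 inf])
    fix t assume "T0 \<le> t"
    hence "t \<ge> 0" using T0[of t] by linarith
    thus "Im (w t) > 0" by (rule pos)
  qed
  have Wlim: "((\<lambda>t. (w t)\<^sup>2 / of_real t) \<longlongrightarrow> - of_real (2 * VV)) at_top"
  proof (rule W_asym[where T=T0 and E="\<lambda>t. 2 * EE (w t)"])
    show "((\<lambda>t. 2 * EE (w t)) \<longlongrightarrow> 0) at_top" using tendsto_mult[OF tendsto_const Elim, of 2] by simp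
    fix t assume t: "t \<ge> T0"
    have t0: "t \<ge> 0" using T0[OF t] by auto
    have d: "(w has_vector_derivative K t) (at t within {T0..})"
      using derat[OF t] by (rule has_vector_derivative_at_within)
    have "((\<lambda>t. w t * w t) has_vector_derivative (w t * K t + K t * w t)) (at t within {T0..})"
      by (rule has_vector_derivative_mult[OF d d])
    moreover have "w t * K t + K t * w t = - of_real (2 * VV) + 2 * EE (w t)"
    proof -
      have e: "w t * K t = EE (w t) - of_real VV" using wK[OF pos[OF t0]] unfolding K_def .
      have "w t * K t + K t * w t = 2 * (w t * K t)" by (simp add: mult.commute)
      also have "\<dots> = - of_real (2 * VV) + 2 * EE (w t)" unfolding e by (simp add: algebra_simps)
      finally show ?thesis .
    qed
    ultimately show "((\<lambda>t. (w t)\<^sup>2) has_vector_derivative (- of_real (2 * VV) + 2 * EE (w t))) (at t within {T0..})"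
      by (simp add: power2_eq_square)
  qed
  show "((\<lambda>t. Arg (phi t z)) \<longlongrightarrow> pi / 2) at_top"
    using Arg_lim[OF VVp pos Wlim] unfolding w_def by simp
qed

end
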